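(* Let $A$ be a DFA and let $\tilde{A}$ be the DFA obtained from $A$ by the following minimization procedure: first remove all states not reachable from the initial state; then partition the remaining states into Myhill–Nerode classes (classes of indistinguishable states); then, for each class, repeatedly apply elementary merge operations merging two states of the class until each class is collapsed into a single state. If $A$ contains a single closed communicating class and this class is aperiodic, then $\tilde{A}$ also contains a single closed communicating class and this class is aperiodic.
   Context: An NFA is a tuple $A = \langle \Sigma, Q, q_0, \tau, \phi\rangle$ with finite alphabet $\Sigma$, finite state set $Q$, initial state $q_0$, transition function $\tau : Q \times \Sigma \to 2^Q$ and termination function $\phi : Q \to \{0,1\}$; $\tau$ extends to strings by $\tau(q,\lambda) = \{q\}$, $\tau(q, x\sigma) = \bigcup_{q' \in \tau(q,x)} \tau(q',\sigma)$, and to sets by $\tau(S, X) = \bigcup_{q\in S, x \in X}\tau(q,x)$; write $\tau_1(S) = \tau(S,\Sigma)$, $\tau_\star(S) = \tau(S,\Sigma^\star)$. A DFA is an NFA with $|\tau(q,\sigma)| = 1$ for all $q,\sigma$. The language of $A$ is the set of strings $x$ such that $\phi(q) = 1$ for some $q \in \tau(q_0,x)$; two states $q,q'$ are indistinguishable if the NFAs obtained from $A$ by making $q$, resp. $q'$, the initial state accept the same language. A state $q'$ is reachable if $q' \in \tau_\star(q_0)$. States $q,q'$ communicate if $q' \in \tau_\star(q)$ and $q \in \tau_\star(q')$; the equivalence classes are communicating classes, and a class $Q'$ is closed if $\tau_\star(Q') = Q'$. For $k>1$ a closed communicating class $Q'$ is $k$-periodic if it has a partition into $k$ parts $Q'_0,\ldots,Q'_{k-1}$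 with $\tau_1(Q'_i) = Q'_{(i+1)\bmod k}$ for all $i$; it is aperiodic if it is not $k$-periodic for any $k>1$. Given NFAs $A$ and $\tilde{A} = \langle \Sigma, \tilde{Q}, \tilde{q}_0, \tilde{\tau}, \tilde{\phi}\rangle$, $\tilde{A}$ is obtained from $A$ by a merge operation $\Psi : Q \to \tilde{Q}$ if $\Psi$ is surjective, $\Psi(q_0) = \tilde{q}_0$, $\phi(q) = \tilde{\phi}(\Psi(q))$ for all $q$, and $q' \in \tau(q,\sigma)$ implies $\Psi(q') \in \tilde{\tau}(\Psi(q),\sigma)$. The merge is elementary if $|\tilde{Q}| = |Q| - 1$ (exactly two states are identified). *)

theory Defs
  imports Main
begin

record ('q, 'a) nfa =
  alph   :: "'a set"
  states :: "'q set"
  init   :: "'q"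
  trans  :: "'q \<Rightarrow> 'a \<Rightarrow> 'q set"
  final  :: "'q \<Rightarrow> bool"

definition nfa_wf :: "('q, 'a) nfa \<Rightarrow> bool" where
  "nfa_wf A \<longleftrightarrow> finite (alph A) \<and> finite (states A) \<and> init A \<in> states A \<and>
     (\<forall>q\<in>states A. \<forall>a\<in>alph A. trans A q a \<subseteq> states A)"

definition is_dfa :: "('q, 'a) nfa \<Rightarrow> bool" where
  "is_dfa A \<longleftrightarrow> nfa_wf A \<and> (\<forall>q\<in>states A. \<forall>a\<in>alph A. card (trans A q a) = 1)"

fun steps :: "('q, 'a) nfa \<Rightarrow> 'q set \<Rightarrow> 'a list \<Rightarrow> 'q set" where
  "steps A S [] = S"
| "steps A S (x # xs) = steps A (\<Union>q\<in>S. trans A q x) xs"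

definition tau1 :: "('q, 'a) nfa \<Rightarrow> 'q set \<Rightarrow> 'q set" where
  "tau1 A S = (\<Union>q\<in>S. \<Union>a\<in>alph A. trans A q a)"

definition tau_star :: "('q, 'a) nfa \<Rightarrow> 'q set \<Rightarrow> 'q set" where
  "tau_star A S = (\<Union>xs\<in>lists (alph A). steps A S xs)"

definition lang_from :: "('q, 'a) nfa \<Rightarrow> 'q \<Rightarrow> 'a list set" where
  "lang_from A q = {xs \<in> lists (alph A). \<exists>p\<in>steps A {q} xs. final A p}"

definition indist :: "('q, 'a) nfa \<Rightarrow> 'q \<Rightarrow> 'q \<Rightarrow> bool" where
  "indist A q q' \<longleftrightarrow> lang_from A q = lang_from A q'"

definition reachable_states :: "('q, 'a) nfa \<Rightarrow> 'q set" where
  "reachable_states A = tau_star A {init A}"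

definition restrict_reachable :: "('q, 'a) nfa \<Rightarrow> ('q, 'a) nfa" where
  "restrict_reachable A = A\<lparr>states := reachable_states A\<rparr>"

definition communicate :: "('q, 'a) nfa \<Rightarrow> 'q \<Rightarrow> 'q \<Rightarrow> bool" where
  "communicate A q q' \<longleftrightarrow> q' \<in> tau_star A {q} \<and> q \<in> tau_star A {q'}"

definition comm_class :: "('q, 'a) nfa \<Rightarrow> 'q set \<Rightarrow> bool" where
  "comm_class A C \<longleftrightarrow> (\<exists>q\<in>states A. C = {q'\<in>states A. communicate A q q'})"

definition closed_comm_class :: "('q, 'a) nfa \<Rightarrow> 'q set \<Rightarrow> bool" where
  "closed_comm_class A C \<longleftrightarrow> comm_class A C \<and> tau_star A C = C"

definition periodic :: "('q, 'a) nfa \<Rightarrow> nat \<Rightarrow> 'q set \<Rightarrow> bool" where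
  "periodic A k C \<longleftrightarrow> closed_comm_class A C \<and> k > 1 \<and>
     (\<exists>P :: nat \<Rightarrow> 'q set.
        (\<Union>i<k. P i) = C \<and>
        (\<forall>i<k. P i \<noteq> {}) \<and>
        (\<forall>i<k. \<forall>j<k. i \<noteq> j \<longrightarrow> P i \<inter> P j = {}) \<and>
        (\<forall>i<k. tau1 A (P i) = P ((i + 1) mod k)))"

definition aperiodic :: "('q, 'a) nfa \<Rightarrow> 'q set \<Rightarrow> bool" where
  "aperiodic A C \<longleftrightarrow> closed_comm_class A C \<and> \<not> (\<exists>k>1. periodic A k C)"

definition single_aperiodic_closed_class :: "('q, 'a) nfa \<Rightarrow> bool" where
  "single_aperiodic_closed_class A \<longleftrightarrow>
     (\<exists>!C. closed_comm_class A C) \<and> (\<forall>C. closed_comm_class A C \<longrightarrow> aperiodic A C)"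

definition merge_op :: "('q, 'a) nfa \<Rightarrow> ('p, 'a) nfa \<Rightarrow> ('q \<Rightarrow> 'p) \<Rightarrow> bool" where
  "merge_op A B \<Psi> \<longleftrightarrow> alph B = alph A \<and> \<Psi> ` states A = states B \<and> \<Psi> (init A) = init B \<and>
     (\<forall>q\<in>states A. final A q = final B (\<Psi> q)) \<and>
     (\<forall>q\<in>states A. \<forall>a\<in>alph A. \<forall>q'\<in>trans A q a. \<Psi> q' \<in> trans B (\<Psi> q) a)"

end

theory Submission
  imports Defs
begin

lemma steps_mono: "S \<subseteq> T \<Longrightarrow> steps X S xs \<subseteq> steps X T xs"
proof (induction xs arbitrary: S T)
  case Nil then show ?case by simp
next
  case (Cons x xs)
  have "(\<Union>q\<in>S. trans X q x) \<subseteq> (\<Union>q\<in>T. trans X q x)" using Cons.prems by blast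
  then show ?case using Cons.IH by simp
qed

lemma steps_append: "steps X S (xs @ ys) = steps X (steps X S xs) ys"
  by (induction xs arbitrary: S) auto

lemma steps_single: "steps X S xs = (\<Union>q\<in>S. steps X {q} xs)"
proof (induction xs arbitrary: S)
  case Nil then show ?case by simp
next
  case (Cons x xs)
  show ?case
    apply (simp only: steps.simps)
    apply (subst Cons.IH)
    apply (subst (2) Cons.IH)
    by auto
qed

lemma tau_star_incl: "S \<subseteq> tau_star X S"
  unfolding tau_star_def
  by (metis (no_types, lifting) UN_upper lists.Nil steps.simps(1))

lemma tau_star_mono: "S \<subseteq> T \<Longrightarrow> tau_star X S \<subseteq> tau_star X T"
  unfolding tau_star_def using steps_mono by (metis SUP_mono)

lemma tau_star_idem: "tau_star X (tau_star X S) = tau_star X S"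
proof
  show "tau_star X S \<subseteq> tau_star X (tau_star X S)" by (rule tau_star_incl)
next
  show "tau_star X (tau_star X S) \<subseteq> tau_star X S"
  proof
    fix x assume "x \<in> tau_star X (tau_star X S)"
    then obtain ys where ys: "ys \<in> lists (alph X)" "x \<in> steps X (tau_star X S) ys"
      unfolding tau_star_def by blast
    then obtain q where q: "q \<in> tau_star X S" "x \<in> steps X {q} ys"
      using steps_single[of X "tau_star X S" ys] by auto
    then obtain xs where xs: "xs \<in> lists (alph X)" "q \<in> steps X S xs"
      unfolding tau_star_def by blast
    have "{q} \<subseteq> steps X S xs" using xs by simp
    then have "steps X {q} ys \<subseteq> steps X (steps X S xs) ys" by (rule steps_mono)
    then have "x \<in> steps X S (xs @ ys)" using q(2) unfolding steps_append by (rule subsetD)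
    moreover have "xs @ ys \<in> lists (alph X)" using xs ys by simp
    ultimately show "x \<in> tau_star X S" unfolding tau_star_def by blast
  qed
qed

lemma tau1_sub_star: "tau1 X S \<subseteq> tau_star X S"
proof
  fix x assume "x \<in> tau1 X S"
  then obtain q a where "q \<in> S" "a \<in> alph X" "x \<in> trans X q a" unfolding tau1_def by blast
  then have "x \<in> steps X S [a]" by auto
  moreover have "[a] \<in> lists (alph X)" using \<open>a \<in> alph X\<close> by simp
  ultimately show "x \<in> tau_star X S" unfolding tau_star_def by blast
qed

lemma tau_star_least:
  assumes "S \<subseteq> T" "tau1 X T \<subseteq> T"
  shows "tau_star X S \<subseteq> T"
proof -
  have "xs \<in> lists (alph X) \<Longrightarrow> S \<subseteq> T \<Longrightarrow> steps X S xs \<subseteq> T" for xs S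
  proof (induction xs arbitrary: S)
    case Nil then show ?case by simp
  next
    case (Cons x xs)
    have "(\<Union>q\<in>S. trans X q x) \<subseteq> tau1 X T" using Cons.prems unfolding tau1_def by auto
    then have "(\<Union>q\<in>S. trans X q x) \<subseteq> T" using assms(2) by blast
    then show ?case using Cons by simp
  qed
  then show ?thesis using assms(1) unfolding tau_star_def by blast
qed

lemma tau_star_states:
  assumes "nfa_wf X" "S \<subseteq> states X"
  shows "tau_star X S \<subseteq> states X"
  apply (rule tau_star_least[OF assms(2)])
  using assms(1) unfolding nfa_wf_def tau1_def by blast

lemma tau_star_pred:
  assumes "q \<in> tau_star X S"
  shows "q \<in> S \<or> (\<exists>r\<in>tau_star X S. q \<in> tau1 X {r})"
proof -
  obtain xs where xs: "xs \<in> lists (alph X)" "q \<in> steps X S xs"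
    using assms unfolding tau_star_def by blast
  show ?thesis
  proof (cases xs rule: rev_exhaust)
    case Nil then show ?thesis using xs by simp
  next
    case (snoc ys y)
    then have "q \<in> steps X (steps X S ys) [y]" using xs steps_append by metis
    then obtain r where r: "r \<in> steps X S ys" "q \<in> trans X r y" by auto
    have "ys \<in> lists (alph X)" "y \<in> alph X" using xs snoc by auto
    then have "r \<in> tau_star X S" using r unfolding tau_star_def by blast
    moreover have "q \<in> tau1 X {r}" using r \<open>y \<in> alph X\<close> unfolding tau1_def by blast
    ultimately show ?thesis by blast
  qed
qed

lemma cc_eq:
  assumes "closed_comm_class X D" "x \<in> D"
  shows "D = tau_star X {x}"
proof -
  obtain q where q: "q \<in> states X" "D = {q'\<in>states X. communicate X q q'}"
    and cl: "tau_star X D = D"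
    using assms(1) unfolding closed_comm_class_def comm_class_def by blast
  have "tau_star X {x} \<subseteq> D" using tau_star_mono[of "{x}" D X] assms(2) cl by auto
  moreover have "q \<in> tau_star X {x}" using assms(2) q unfolding communicate_def by blast
  then have "tau_star X {q} \<subseteq> tau_star X {x}"
    using tau_star_mono[of "{q}" "tau_star X {x}" X] unfolding tau_star_idem by simp
  moreover have "D \<subseteq> tau_star X {q}" using q unfolding communicate_def by blast
  ultimately show ?thesis by blast
qed

lemma cc_ne:
  assumes "closed_comm_class X D"
  shows "\<exists>x. x \<in> D"
proof -
  obtain q where q: "q \<in> states X" "D = {q'\<in>states X. communicate X q q'}"
    using assms unfolding closed_comm_class_def comm_class_def by blast
  have "q \<in> tau_star X {q}" using tau_star_incl[of "{q}" X] by simp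
  then have "q \<in> D" using q unfolding communicate_def by blast
  then show ?thesis by blast
qed

lemma cc_intro:
  assumes "nfa_wf X" "q \<in> states X" "\<forall>y\<in>tau_star X {q}. q \<in> tau_star X {y}"
  shows "closed_comm_class X (tau_star X {q})"
proof -
  have "tau_star X {q} \<subseteq> states X" using tau_star_states assms(1,2) by blast
  then have "tau_star X {q} = {q'\<in>states X. communicate X q q'}"
    using assms(3) unfolding communicate_def by blast
  then have "comm_class X (tau_star X {q})" unfolding comm_class_def using assms(2) by blast
  then show ?thesis unfolding closed_comm_class_def by (simp add: tau_star_idem)
qed

lemma exists_closed:
  assumes "nfa_wf X" "q0 \<in> states X"
  shows "\<exists>q1\<in>tau_star X {q0}. closed_comm_class X (tau_star X {q1})"
proof -
  have M: "tau_star X {q0} \<subseteq> states X" using tau_star_states assms by blast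
  have fin: "finite (states X)" using assms(1) unfolding nfa_wf_def by blast
  have "q0 \<in> tau_star X {q0}" using tau_star_incl[of "{q0}" X] by simp
  then obtain q1 where q1: "q1 \<in> tau_star X {q0}"
    and mn: "\<forall>y. y \<in> tau_star X {q0} \<longrightarrow> card (tau_star X {q1}) \<le> card (tau_star X {y})"
    using ex_has_least_nat[of "\<lambda>y. y \<in> tau_star X {q0}" q0 "\<lambda>y. card (tau_star X {y})"] by blast
  have sub1: "tau_star X {q1} \<subseteq> tau_star X {q0}"
    using q1 tau_star_mono[of "{q1}" "tau_star X {q0}" X] unfolding tau_star_idem by simp
  have "q1 \<in> tau_star X {y}" if y: "y \<in> tau_star X {q1}" for y
  proof -
    have sub: "tau_star X {y} \<subseteq> tau_star X {q1}"
      using y tau_star_mono[of "{y}" "tau_star X {q1}" X] unfolding tau_star_idem by simp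
    have "finite (tau_star X {q1})" using sub1 M fin by (meson finite_subset)
    moreover have "card (tau_star X {q1}) \<le> card (tau_star X {y})" using mn y sub1 by (meson subsetD)
    ultimately have "tau_star X {y} = tau_star X {q1}" using sub
      by (meson card_seteq)
    then show ?thesis using tau_star_incl[of "{q1}" X] by simp
  qed
  moreover have "q1 \<in> states X" using q1 M by (meson subsetD)
  ultimately have "closed_comm_class X (tau_star X {q1})" using cc_intro[OF assms(1)] by blast
  then show ?thesis using q1 by blast
qed

theorem theorem4:
  fixes A :: "('q, 'a) nfa" and B :: "('p, 'a) nfa" and \<Psi> :: "'q \<Rightarrow> 'p"
  assumes "is_dfa A"
    and "is_dfa B"
    and "merge_op (restrict_reachable A) B \<Psi>"
    and "\<forall>q\<in>reachable_states A. \<forall>q'\<in>reachable_states A. \<Psi> q = \<Psi> q' \<longleftrightarrow> indist A q q'"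
    and "single_aperiodic_closed_class A"
  shows "single_aperiodic_closed_class B"
proof -
  define R where "R = reachable_states A"
  have wfA: "nfa_wf A" and wfB: "nfa_wf B" using assms(1,2) unfolding is_dfa_def by auto
  have mo: "alph B = alph A" "\<Psi> ` R = states B" "\<Psi> (init A) = init B"
     "\<forall>q\<in>R. \<forall>a\<in>alph A. \<forall>q'\<in>trans A q a. \<Psi> q' \<in> trans B (\<Psi> q) a"
    using assms(3) unfolding merge_op_def restrict_reachable_def R_def by auto
  have initA: "init A \<in> states A" using wfA unfolding nfa_wf_def by blast
  have RA: "R \<subseteq> states A" unfolding R_def reachable_states_def
    using tau_star_states[OF wfA] initA by blast
  have Rid: "tau_star A R = R" unfolding R_def reachable_states_def by (rule tau_star_idem)
  have Rcl: "trans A q a \<subseteq> R" if "q \<in> R" "a \<in> alph A" for q a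
    using tau1_sub_star[of A R] Rid that unfolding tau1_def by blast
  obtain C where C: "closed_comm_class A C" and Cu: "\<And>C'. closed_comm_class A C' \<Longrightarrow> C' = C"
    and Cap: "aperiodic A C"
    using assms(5) unfolding single_aperiodic_closed_class_def by blast
  have reachC: "\<exists>q1\<in>tau_star A {q0}. q1 \<in> C" if q0s: "q0 \<in> states A" for q0
  proof -
    obtain q1 where "q1 \<in> tau_star A {q0}" "closed_comm_class A (tau_star A {q1})"
      using exists_closed[OF wfA q0s] by blast
    moreover have "q1 \<in> tau_star A {q1}" using tau_star_incl[of "{q1}" A] by simp
    ultimately show ?thesis using Cu by metis
  qed
  have CR: "C \<subseteq> R"
  proof -
    obtain q1 where q1: "q1 \<in> R" "q1 \<in> C" using reachC[OF initA]
      unfolding R_def reachable_states_def by blast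
    have "C = tau_star A {q1}" using cc_eq[OF C q1(2)] .
    then show ?thesis using tau_star_mono[of "{q1}" R A] q1 Rid by simp
  qed
  have hom1: "trans B (\<Psi> q) a = \<Psi> ` trans A q a" if "q \<in> R" "a \<in> alph A" for q a
  proof -
    have "card (trans A q a) = 1" using assms(1) that RA unfolding is_dfa_def by blast
    then obtain r where r: "trans A q a = {r}" using card_1_singletonE by blast
    have "\<Psi> r \<in> trans B (\<Psi> q) a" using mo(4) that r by blast
    moreover have "card (trans B (\<Psi> q) a) = 1" using assms(2) that mo unfolding is_dfa_def by blast
    ultimately show ?thesis using r by (metis card_1_singletonE image_empty image_insert singletonD)
  qed
  have homstar: "tau_star B {\<Psi> q} = \<Psi> ` tau_star A {q}" if qR: "q \<in> R" for q
  proof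
    have TR: "tau_star A {q} \<subseteq> R" using tau_star_mono[of "{q}" R A] qR Rid by simp
    show "tau_star B {\<Psi> q} \<subseteq> \<Psi> ` tau_star A {q}"
    proof (rule tau_star_least)
      show "{\<Psi> q} \<subseteq> \<Psi> ` tau_star A {q}" using tau_star_incl[of "{q}" A] by simp
      show "tau1 B (\<Psi> ` tau_star A {q}) \<subseteq> \<Psi> ` tau_star A {q}"
      proof
        fix x assume "x \<in> tau1 B (\<Psi> ` tau_star A {q})"
        then obtain r a where ra: "r \<in> tau_star A {q}" "a \<in> alph A" "x \<in> trans B (\<Psi> r) a"
          unfolding tau1_def mo(1) by blast
        then obtain r' where "r' \<in> trans A r a" "x = \<Psi> r'" using hom1 TR by blast
        then have "r' \<in> tau1 A (tau_star A {q})" using ra unfolding tau1_def by blast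
        then have "r' \<in> tau_star A {q}" using tau1_sub_star[of A "tau_star A {q}"] unfolding tau_star_idem by blast
        then show "x \<in> \<Psi> ` tau_star A {q}" using \<open>x = \<Psi> r'\<close> by blast
      qed
    qed
    show "\<Psi> ` tau_star A {q} \<subseteq> tau_star B {\<Psi> q}"
    proof -
      have "tau_star A {q} \<subseteq> {r\<in>R. \<Psi> r \<in> tau_star B {\<Psi> q}}"
      proof (rule tau_star_least)
        show "{q} \<subseteq> {r \<in> R. \<Psi> r \<in> tau_star B {\<Psi> q}}" using qR tau_star_incl[of "{\<Psi> q}" B] by simp
        show "tau1 A {r \<in> R. \<Psi> r \<in> tau_star B {\<Psi> q}} \<subseteq> {r \<in> R. \<Psi> r \<in> tau_star B {\<Psi> q}}"
        proof
          fix x assume "x \<in> tau1 A {r \<in> R. \<Psi> r \<in> tau_star B {\<Psi> q}}"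
          then obtain r a where ra: "r \<in> R" "\<Psi> r \<in> tau_star B {\<Psi> q}" "a \<in> alph A" "x \<in> trans A r a"
            unfolding tau1_def by blast
          then have "x \<in> R" using Rcl by blast
          have "\<Psi> x \<in> trans B (\<Psi> r) a" using mo(4) ra by blast
          then have "\<Psi> x \<in> tau1 B (tau_star B {\<Psi> q})" using ra mo(1) unfolding tau1_def by blast
          then have "\<Psi> x \<in> tau_star B {\<Psi> q}" using tau1_sub_star[of B "tau_star B {\<Psi> q}"] unfolding tau_star_idem by blast
          then show "x \<in> {r \<in> R. \<Psi> r \<in> tau_star B {\<Psi> q}}" using \<open>x \<in> R\<close> by blast
        qed
      qed
      then show ?thesis by blast
    qed
  qed
  define D where "D = \<Psi> ` C"
  obtain q1 where q1: "q1 \<in> C" using cc_ne[OF C] by blast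
  have Deq: "D = tau_star B {\<Psi> q1}"
    unfolding D_def using cc_eq[OF C q1] homstar[of q1] q1 CR by (simp add: subsetD)
  have Dcl: "closed_comm_class B D"
    unfolding Deq
  proof (rule cc_intro[OF wfB])
    show "\<Psi> q1 \<in> states B" using q1 CR mo(2) by blast
    show "\<forall>y\<in>tau_star B {\<Psi> q1}. \<Psi> q1 \<in> tau_star B {y}"
    proof
      fix y assume "y \<in> tau_star B {\<Psi> q1}"
      then obtain r where r: "r \<in> C" "y = \<Psi> r" using Deq D_def by blast
      have "q1 \<in> tau_star A {r}" using cc_eq[OF C r(1)] q1 by blast
      then show "\<Psi> q1 \<in> tau_star B {y}" using homstar[of r] r CR by (simp add: subsetD)
    qed
  qed
  have Du: "D' = D" if D': "closed_comm_class B D'" for D'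
  proof -
    obtain p0 where p0: "p0 \<in> D'" using cc_ne[OF D'] by blast
    have "p0 \<in> states B" using D' p0 unfolding closed_comm_class_def comm_class_def by blast
    then obtain q0 where q0: "q0 \<in> R" "p0 = \<Psi> q0" using mo(2) by blast
    obtain q2 where q2: "q2 \<in> tau_star A {q0}" "q2 \<in> C" using reachC q0 RA by blast
    have "\<Psi> q2 \<in> D'" using cc_eq[OF D' p0] q0 homstar q2 by blast
    moreover have "\<Psi> q2 \<in> D" using q2 D_def by blast
    ultimately show ?thesis using cc_eq[OF D'] cc_eq[OF Dcl] by metis
  qed
  have Dap: "aperiodic B D"
    unfolding aperiodic_def
  proof (intro conjI Dcl notI)
    assume "\<exists>k>1. periodic B k D"
    then obtain k :: nat and P :: "nat \<Rightarrow> 'p set" where k: "k > 1" and PU: "(\<Union>i<k. P i) = D" and Pne: "\<forall>i<k. P i \<noteq> {}"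
      and Pd: "\<forall>i<k. \<forall>j<k. i \<noteq> j \<longrightarrow> P i \<inter> P j = {}"
      and Pt: "\<forall>i<k. tau1 B (P i) = P ((i + 1) mod k)"
      unfolding periodic_def by blast
    define Q where "Q i = {q\<in>C. \<Psi> q \<in> P i}" for i
    have QU: "(\<Union>i<k. Q i) = C"
    proof
      show "(\<Union>i<k. Q i) \<subseteq> C" unfolding Q_def by auto
      show "C \<subseteq> (\<Union>i<k. Q i)"
      proof
        fix q assume q: "q \<in> C"
        then have "\<Psi> q \<in> (\<Union>i<k. P i)" using PU unfolding D_def by simp
        then obtain i where "i < k" "\<Psi> q \<in> P i" by blast
        then show "q \<in> (\<Union>i<k. Q i)" using q unfolding Q_def by blast
      qed
    qed
    have Qne: "\<forall>i<k. Q i \<noteq> {}"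
    proof (intro allI impI)
      fix i assume i: "i < k"
      then obtain p where p: "p \<in> P i" using Pne by blast
      then have "p \<in> \<Psi> ` C" using PU i unfolding D_def by blast
      then obtain q where "q \<in> C" "p = \<Psi> q" by blast
      then show "Q i \<noteq> {}" using p unfolding Q_def by blast
    qed
    have Qd: "\<forall>i<k. \<forall>j<k. i \<noteq> j \<longrightarrow> Q i \<inter> Q j = {}" using Pd unfolding Q_def by blast
    have Csub: "tau1 A C \<subseteq> C" using tau1_sub_star[of A C] C unfolding closed_comm_class_def by simp
    have Qt1: "tau1 A (Q i) \<subseteq> Q ((i + 1) mod k)" if i: "i < k" for i
    proof
      fix x assume "x \<in> tau1 A (Q i)"
      then obtain q a where qa: "q \<in> Q i" "a \<in> alph A" "x \<in> trans A q a" unfolding tau1_def by blast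
      have "x \<in> C" using qa Csub unfolding Q_def tau1_def by blast
      have "\<Psi> x \<in> trans B (\<Psi> q) a" using mo(4) qa CR unfolding Q_def by blast
      then have "\<Psi> x \<in> tau1 B (P i)" using qa mo(1) unfolding Q_def tau1_def by blast
      then show "x \<in> Q ((i + 1) mod k)" using Pt i \<open>x \<in> C\<close> unfolding Q_def by blast
    qed
    have modinj: "i = j" if "i < k" "j < k" "(i + 1) mod k = (j + 1) mod k" for i j :: nat
      using that by (auto simp: mod_Suc split: if_splits)
    have Qt: "tau1 A (Q i) = Q ((i + 1) mod k)" if i: "i < k" for i
    proof
      show "tau1 A (Q i) \<subseteq> Q ((i + 1) mod k)" using Qt1 i .
      show "Q ((i + 1) mod k) \<subseteq> tau1 A (Q i)"
      proof
        fix r assume r: "r \<in> Q ((i + 1) mod k)"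
        have rC: "r \<in> C" using r unfolding Q_def by blast
        have k0: "0 < k" "1 < k" using k by auto
        obtain s where s: "s \<in> C" "s \<noteq> r"
        proof -
          obtain a where "a \<in> Q 0" using Qne k0 by blast
          obtain b where "b \<in> Q 1" using Qne k0 by blast
          have "Q 0 \<inter> Q 1 = {}" using Qd k0 by simp
          then have "a \<noteq> b" using \<open>a \<in> Q 0\<close> \<open>b \<in> Q 1\<close> by blast
          moreover have "a \<in> C" "b \<in> C" using \<open>a \<in> Q 0\<close> \<open>b \<in> Q 1\<close> unfolding Q_def by auto
          ultimately show ?thesis using that by metis
        qed
        have Cs: "C = tau_star A {s}" using cc_eq[OF C s(1)] .
        have "r \<in> tau_star A {s}" using Cs rC by simp
        then have "r \<in> {s} \<or> (\<exists>t\<in>tau_star A {s}. r \<in> tau1 A {t})" by (rule tau_star_pred)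
        then obtain t where t: "t \<in> tau_star A {s}" "r \<in> tau1 A {t}"
          using s(2) by blast
        have "t \<in> C" using Cs t(1) by simp
        then obtain j where j: "j < k" "t \<in> Q j" using QU by blast
        have "tau1 A {t} \<subseteq> tau1 A (Q j)" using j unfolding tau1_def by blast
        then have rj: "r \<in> tau1 A (Q j)" using t(2) by (rule subsetD)
        have rj': "r \<in> Q ((j + 1) mod k)" using Qt1[OF j(1)] rj by (rule subsetD)
        have lt: "(j + 1) mod k < k" "(i + 1) mod k < k" using k0 by simp_all
        have "(j + 1) mod k = (i + 1) mod k"
        proof (rule ccontr)
          assume ne: "(j + 1) mod k \<noteq> (i + 1) mod k"
          have "Q ((j + 1) mod k) \<inter> Q ((i + 1) mod k) = {}" using Qd lt ne by blast
          then show False using rj' r by blast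
        qed
        then have "j = i" using modinj[OF j(1) i] by simp
        then show "r \<in> tau1 A (Q i)" using rj by simp
      qed
    qed
    have Qt': "\<forall>i<k. tau1 A (Q i) = Q ((i + 1) mod k)" using Qt by blast
    have "periodic A k C" unfolding periodic_def
      apply (intro conjI C k exI[of _ Q])
      using QU Qne Qd Qt' by auto
    then show False using Cap k unfolding aperiodic_def by blast
  qed
  show ?thesis unfolding single_aperiodic_closed_class_def
    using Dcl Du Dap by blast
qed

end
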